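(* Let $C$ and $C'$ be configurations of 2REG, let $v\in C$, and let $t\ge 0$ be an integer with $\mathrm{d}_C((0,0),v)\le t$. Then $C\equiv'_{t,v}C'$ if and only if both of the following hold: (1) $C'$ is a consistent extension of the subset $M(v,t,C)$ of $C$; and (2) $M(v,t,C')\setminus M(v,t,C)=\emptyset$.
   Context: Positions are elements of $\mathbb{Z}^2$. Put $\epsilon_0=(1,0)$, $\epsilon_1=(0,1)$, $\epsilon_2=(-1,0)$, $\epsilon_3=(0,-1)$. Two positions $p,p'$ are adjacent if $p'-p\in\{\epsilon_0,\epsilon_1,\epsilon_2,\epsilon_3\}$. A path is a nonempty sequence of positions in which consecutive positions are adjacent; a set of positions $C$ is connected if any two of its elements are joined by a path inside $C$. A configuration of 2REG is a finite connected set $C\subseteq\mathbb{Z}^2$ containing the origin $(0,0)$ (the position of the general). For $p,p'\in C$, $\mathrm{d}_C(p,p')$ is the number of steps of a shortest path from $p$ to $p'$ inside $C$. For $p\in C$, the boundary condition $\mathrm{bc}_C(p)=(b_0,b_1,b_2,b_3)\in\{0,1\}^4$ has $b_i=1$ iff $p+\epsilon_i\in C$. Available information: for a configuration $C$, $v\in C$ and time $t\ge0$, $\mathrm{ai}(v,t,C)$ is the symbol $\mathrm{Q}$ if $\mathrm{d}_C((0,0),v)>t$, and otherwise the triple $(t,v,X)$ where $X=\{(v',\mathrm{bc}_C(v')) : v'\in C,\ \mathrm{d}_C((0,0),v')+\mathrm{d}_C(v',v)\le t\}$. For configurations $C,C'$, $C\equiv'_{t,v}C'$ means $v\in C\cap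 C'$ and $\mathrm{ai}(v,t,C)=\mathrm{ai}(v,t,C')\ne\mathrm{Q}$. Define $M(v,t,C)=\{v'\in C : \mathrm{d}_C((0,0),v')+\mathrm{d}_C(v',v)\le t\}$. For a configuration $C$, a subset $M\subseteq C$ and a configuration $C'$, $C'$ is a consistent extension of $M$ (as a subset of $C$) if $M\subseteq C'$ and $\mathrm{bc}_C(w)=\mathrm{bc}_{C'}(w)$ for every $w\in M$. *)

theory Defs
  imports Main "HOL-Library.Product_Plus"
begin

type_synonym pos = "int \<times> int"

definition eps :: "nat \<Rightarrow> pos" where
  "eps i = (if i = 0 then (1,0) else if i = 1 then (0,1) else if i = 2 then (-1,0) else (0,-1))"

definition adjacent :: "pos \<Rightarrow> pos \<Rightarrow> bool" where
  "adjacent p p' \<longleftrightarrow> (\<exists>i<4. p' = p + eps i)"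

definition is_path :: "pos list \<Rightarrow> bool" where
  "is_path ps \<longleftrightarrow> ps \<noteq> [] \<and> (\<forall>i. Suc i < length ps \<longrightarrow> adjacent (ps ! i) (ps ! Suc i))"

definition path_in :: "pos set \<Rightarrow> pos \<Rightarrow> pos \<Rightarrow> pos list \<Rightarrow> bool" where
  "path_in C p p' ps \<longleftrightarrow> is_path ps \<and> hd ps = p \<and> last ps = p' \<and> set ps \<subseteq> C"

definition connected_set :: "pos set \<Rightarrow> bool" where
  "connected_set C \<longleftrightarrow> (\<forall>p\<in>C. \<forall>p'\<in>C. \<exists>ps. path_in C p p' ps)"

definition configuration :: "pos set \<Rightarrow> bool" where
  "configuration C \<longleftrightarrow> finite C \<and> connected_set C \<and> (0,0) \<in> C"

definition dist_in :: "pos set \<Rightarrow> pos \<Rightarrow> pos \<Rightarrow> nat" where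
  "dist_in C p p' = (LEAST n. \<exists>ps. path_in C p p' ps \<and> length ps = Suc n)"

definition bc :: "pos set \<Rightarrow> pos \<Rightarrow> bool \<times> bool \<times> bool \<times> bool" where
  "bc C p = (p + eps 0 \<in> C, p + eps 1 \<in> C, p + eps 2 \<in> C, p + eps 3 \<in> C)"

datatype ainfo = Q | Info nat pos "(pos \<times> (bool \<times> bool \<times> bool \<times> bool)) set"

definition ai :: "pos \<Rightarrow> nat \<Rightarrow> pos set \<Rightarrow> ainfo" where
  "ai v t C = (if dist_in C (0,0) v > t then Q
     else Info t v {(v', bc C v') | v'. v' \<in> C \<and> dist_in C (0,0) v' + dist_in C v' v \<le> t})"

definition equiv' :: "nat \<Rightarrow> pos \<Rightarrow> pos set \<Rightarrow> pos set \<Rightarrow> bool" where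
  "equiv' t v C C' \<longleftrightarrow> v \<in> C \<and> v \<in> C' \<and> ai v t C = ai v t C' \<and> ai v t C \<noteq> Q"

definition Mset :: "pos \<Rightarrow> nat \<Rightarrow> pos set \<Rightarrow> pos set" where
  "Mset v t C = {v' \<in> C. dist_in C (0,0) v' + dist_in C v' v \<le> t}"

definition consistent_extension :: "pos set \<Rightarrow> pos set \<Rightarrow> pos set \<Rightarrow> bool" where
  "consistent_extension C M C' \<longleftrightarrow> M \<subseteq> C' \<and> (\<forall>w\<in>M. bc C w = bc C' w)"

end

theory Submission
  imports Defs
begin

lemma is_path_append:
  assumes "is_path xs" "is_path ys" "adjacent (last xs) (hd ys)"
  shows "is_path (xs @ ys)"
  unfolding is_path_def
proof (intro conjI allI impI)
  show "xs @ ys \<noteq> []" using assms(1) by (simp add: is_path_def)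
  fix i assume i: "Suc i < length (xs @ ys)"
  consider "Suc i < length xs" | "Suc i = length xs" | "Suc i > length xs" by linarith
  then show "adjacent ((xs @ ys) ! i) ((xs @ ys) ! Suc i)"
  proof cases
    case 1 then show ?thesis using assms(1) by (simp add: is_path_def nth_append)
  next
    case 2
    have "xs ! i = last xs" using 2 by (metis diff_Suc_1 last_conv_nth list.size(3) nat.simps(3))
    moreover have "ys ! 0 = hd ys" using assms(2) by (simp add: is_path_def hd_conv_nth)
    ultimately show ?thesis using 2 assms(3) by (simp add: nth_append)
  next
    case 3
    then obtain k where k: "i = length xs + k" by (metis less_Suc_eq_le le_Suc_ex less_imp_le_nat Suc_lessD)
    have "Suc k < length ys" using i k by simp
    then show ?thesis using assms(2) k by (simp add: is_path_def nth_append)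
  qed
qed

lemma path_in_append:
  assumes "path_in C p q ps" "path_in C q r qs"
  shows "path_in C p r (ps @ tl qs) \<and> length (ps @ tl qs) = length ps + length qs - 1"
proof (cases "tl qs = []")
  case True
  have ne: "qs \<noteq> []" using assms(2) by (simp add: path_in_def is_path_def)
  then have q1: "qs = [hd qs]" using True by (metis list.collapse)
  then have "r = q" using assms(2) unfolding path_in_def by (metis last_ConsL)
  moreover have "length qs = 1" using q1 by (metis One_nat_def length_Cons list.size(3))
  ultimately show ?thesis using assms True ne unfolding path_in_def by simp
next
  case False
  have ne: "qs \<noteq> []" using assms(2) by (simp add: path_in_def is_path_def)
  obtain a b rest where qs: "qs = a # b # rest" using False ne
    by (metis list.collapse)
  have aq: "a = q" using assms(2) qs by (simp add: path_in_def)
  have pq: "is_path qs" using assms(2) by (simp add: path_in_def)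
  have tlp: "is_path (b # rest)" unfolding is_path_def
  proof (intro conjI allI impI)
    fix i assume "Suc i < length (b # rest)"
    then have "Suc (Suc i) < length qs" using qs by simp
    then have "adjacent (qs ! Suc i) (qs ! Suc (Suc i))" using pq by (simp add: is_path_def)
    then show "adjacent ((b # rest) ! i) ((b # rest) ! Suc i)" using qs by simp
  qed simp
  have "Suc 0 < length qs" using qs by simp
  then have "adjacent (qs ! 0) (qs ! Suc 0)" using pq unfolding is_path_def by blast
  then have adj: "adjacent (last ps) (hd (b # rest))" using assms(1) aq qs by (simp add: path_in_def)
  have "is_path (ps @ (b # rest))" using is_path_append assms(1) tlp adj unfolding path_in_def by blast
  moreover have "set (b # rest) \<subseteq> C" using assms(2) qs unfolding path_in_def by simp
  moreover have "last (b # rest) = r" using assms(2) qs unfolding path_in_def by simp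
  moreover have "hd (ps @ (b # rest)) = p" using assms(1) unfolding path_in_def is_path_def by simp
  ultimately show ?thesis using assms(1) qs unfolding path_in_def by simp
qed

lemma path_in_take:
  assumes "path_in C p q ps" "i < length ps"
  shows "path_in C p (ps ! i) (take (Suc i) ps)"
proof -
  have l: "last (take (Suc i) ps) = ps ! i" using assms(2) by (simp add: take_Suc_conv_app_nth)
  have h: "hd (take (Suc i) ps) = hd ps" using assms(2) by (cases ps) auto
  show ?thesis using assms l h unfolding path_in_def is_path_def
    by (auto dest: in_set_takeD)
qed

lemma path_in_drop:
  assumes "path_in C p q ps" "i < length ps"
  shows "path_in C (ps ! i) q (drop i ps)"
  using assms unfolding path_in_def is_path_def
  by (auto simp: hd_drop_conv_nth dest: in_set_dropD)

lemma dist_le: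
  assumes "path_in C p q ps"
  shows "dist_in C p q \<le> length ps - 1"
proof -
  have "length ps = Suc (length ps - 1)" using assms by (simp add: path_in_def is_path_def)
  then show ?thesis unfolding dist_in_def using assms by (metis (mono_tags, lifting) Least_le)
qed

lemma dist_ex:
  assumes "connected_set C" "p \<in> C" "q \<in> C"
  shows "\<exists>ps. path_in C p q ps \<and> length ps = Suc (dist_in C p q)"
proof -
  obtain ps where ps: "path_in C p q ps" using assms unfolding connected_set_def by blast
  have "length ps = Suc (length ps - 1)" using ps by (simp add: path_in_def is_path_def)
  then have "\<exists>n ps. path_in C p q ps \<and> length ps = Suc n" using ps by blast
  then show ?thesis unfolding dist_in_def by (rule LeastI_ex)
qed

lemma dist_tri:
  assumes "connected_set C" "p \<in> C" "q \<in> C" "r \<in> C"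
  shows "dist_in C p r \<le> dist_in C p q + dist_in C q r"
proof -
  obtain ps where ps: "path_in C p q ps" "length ps = Suc (dist_in C p q)" using dist_ex assms by blast
  obtain qs where qs: "path_in C q r qs" "length qs = Suc (dist_in C q r)" using dist_ex assms by blast
  from path_in_append[OF ps(1) qs(1)] have "dist_in C p r \<le> length (ps @ tl qs) - 1"
    using dist_le by blast
  then show ?thesis using ps qs path_in_append[OF ps(1) qs(1)] by simp
qed

lemma path_in_mono:
  assumes "path_in C p q ps" "set ps \<subseteq> C'"
  shows "path_in C' p q ps"
  using assms unfolding path_in_def by auto

lemma Mset_sub:
  assumes C: "configuration C" and C': "configuration C'"
    and v: "v \<in> C" and sub: "Mset v t C \<subseteq> C'"
    and w: "w \<in> Mset v t C"
  shows "w \<in> Mset v t C'"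
proof -
  have cc: "connected_set C" and o: "(0,0) \<in> C" using C by (auto simp: configuration_def)
  have wC: "w \<in> C" and wt: "dist_in C (0,0) w + dist_in C w v \<le> t" using w by (auto simp: Mset_def)
  obtain ps where ps: "path_in C (0,0) w ps" "length ps = Suc (dist_in C (0,0) w)"
    using dist_ex cc o wC by blast
  obtain qs where qs: "path_in C w v qs" "length qs = Suc (dist_in C w v)"
    using dist_ex cc v wC by blast
  have "set ps \<subseteq> C'"
  proof
    fix x assume "x \<in> set ps"
    then obtain i where i: "i < length ps" "x = ps ! i" by (metis in_set_conv_nth)
    have xC: "x \<in> C" using ps(1) i by (auto simp: path_in_def)
    have "dist_in C (0,0) x \<le> i" using dist_le[OF path_in_take[OF ps(1) i(1)]] i by simp
    moreover have "dist_in C x w \<le> length ps - 1 - i" using dist_le[OF path_in_drop[OF ps(1) i(1)]] i by simp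
    moreover have "dist_in C x v \<le> dist_in C x w + dist_in C w v" using dist_tri cc xC wC v by blast
    ultimately have "x \<in> Mset v t C" using xC wt ps(2) i(1) unfolding Mset_def by simp
    then show "x \<in> C'" using sub by blast
  qed
  then have d1: "dist_in C' (0,0) w \<le> dist_in C (0,0) w"
    using dist_le[OF path_in_mono[OF ps(1)]] ps(2) by fastforce
  have "set qs \<subseteq> C'"
  proof
    fix x assume "x \<in> set qs"
    then obtain i where i: "i < length qs" "x = qs ! i" by (metis in_set_conv_nth)
    have xC: "x \<in> C" using qs(1) i by (auto simp: path_in_def)
    have "dist_in C w x \<le> i" using dist_le[OF path_in_take[OF qs(1) i(1)]] i by simp
    moreover have "dist_in C x v \<le> length qs - 1 - i" using dist_le[OF path_in_drop[OF qs(1) i(1)]] i by simp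
    moreover have "dist_in C (0,0) x \<le> dist_in C (0,0) w + dist_in C w x" using dist_tri cc xC wC o by blast
    ultimately have "x \<in> Mset v t C" using xC wt qs(2) i(1) unfolding Mset_def by simp
    then show "x \<in> C'" using sub by blast
  qed
  then have d2: "dist_in C' w v \<le> dist_in C w v"
    using dist_le[OF path_in_mono[OF qs(1)]] qs(2) by fastforce
  have "w \<in> C'" using sub w by blast
  then show ?thesis using d1 d2 wt by (simp add: Mset_def)
qed

lemma fst_img: "fst ` {(x, f x) | x. P x} = {x. P x}"
  by (auto simp: image_iff)

lemma pair_img: "{(x, f x) | x. P x} = (\<lambda>x. (x, f x)) ` {x. P x}"
  by blast

theorem theorem1:
  assumes "configuration C" and "configuration C'"
    and "v \<in> C" and "dist_in C (0,0) v \<le> t"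
  shows "equiv' t v C C' \<longleftrightarrow>
           (consistent_extension C (Mset v t C) C' \<and> Mset v t C' - Mset v t C = {})"
proof
  assume e: "equiv' t v C C'"
  have "ai v t C \<noteq> Q" "ai v t C' \<noteq> Q" using e by (auto simp: equiv'_def)
  then have eq: "{(v', bc C v') | v'. v' \<in> C \<and> dist_in C (0,0) v' + dist_in C v' v \<le> t}
     = {(v', bc C' v') | v'. v' \<in> C' \<and> dist_in C' (0,0) v' + dist_in C' v' v \<le> t}"
    using e unfolding equiv'_def ai_def by (auto split: if_splits)
  have M: "Mset v t C = Mset v t C'"
  proof -
    have "Mset v t C = fst ` {(v', bc C v') | v'. v' \<in> C \<and> dist_in C (0,0) v' + dist_in C v' v \<le> t}"
      unfolding Mset_def fst_img by simp
    also have "\<dots> = Mset v t C'" unfolding eq Mset_def fst_img by simp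
    finally show ?thesis .
  qed
  have "\<forall>w\<in>Mset v t C. bc C w = bc C' w"
  proof
    fix w assume w: "w \<in> Mset v t C"
    then have "(w, bc C w) \<in> {(v', bc C' v') | v'. v' \<in> C' \<and> dist_in C' (0,0) v' + dist_in C' v' v \<le> t}"
      unfolding eq[symmetric] Mset_def by blast
    then show "bc C w = bc C' w" by blast
  qed
  moreover have "Mset v t C \<subseteq> C'" using M by (auto simp: Mset_def)
  ultimately show "consistent_extension C (Mset v t C) C' \<and> Mset v t C' - Mset v t C = {}"
    using M by (simp add: consistent_extension_def)
next
  assume h: "consistent_extension C (Mset v t C) C' \<and> Mset v t C' - Mset v t C = {}"
  have sub: "Mset v t C \<subseteq> C'" and bceq: "\<forall>w\<in>Mset v t C. bc C w = bc C' w"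
    using h by (auto simp: consistent_extension_def)
  have M: "Mset v t C = Mset v t C'"
    using h Mset_sub[OF assms(1,2,3) sub] by blast
  have dv: "dist_in C v v = 0" using dist_le[of C v v "[v]"] assms(3)
    by (simp add: path_in_def is_path_def)
  have vM: "v \<in> Mset v t C" using assms(3,4) dv by (simp add: Mset_def)
  then have vM': "v \<in> Mset v t C'" using M by simp
  then have vC': "v \<in> C'" and d': "dist_in C' (0,0) v \<le> t" by (auto simp: Mset_def)
  have S: "{(v', bc C v') | v'. v' \<in> C \<and> dist_in C (0,0) v' + dist_in C v' v \<le> t}
     = {(v', bc C' v') | v'. v' \<in> C' \<and> dist_in C' (0,0) v' + dist_in C' v' v \<le> t}"
  proof -
    have "{(v', bc C v') | v'. v' \<in> C \<and> dist_in C (0,0) v' + dist_in C v' v \<le> t}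
        = (\<lambda>w. (w, bc C w)) ` Mset v t C" unfolding Mset_def by (rule pair_img)
    also have "\<dots> = (\<lambda>w. (w, bc C' w)) ` Mset v t C" using bceq by (auto simp: image_def)
    also have "\<dots> = {(v', bc C' v') | v'. v' \<in> C' \<and> dist_in C' (0,0) v' + dist_in C' v' v \<le> t}"
      unfolding M unfolding Mset_def by (rule pair_img[symmetric])
    finally show ?thesis .
  qed
  show "equiv' t v C C'" unfolding equiv'_def ai_def using assms(3,4) vC' d' S by simp
qed

end
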